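(* Suppose $B^2(\mathcal Z)\subseteq\underline{\mathcal Z}$. Let $H:\underline{\mathcal Z}\to\mathcal Y$ be a linear functional that has the minimal FMP and is minimally continuous. Let $\mathcal Y_0$ be the closure of $\operatorname{span}(H(\underline{\mathcal Z}))$ in $\mathcal Y$, and let $\mathbb H$ be the reproducing kernel Hilbert space associated to the kernel $K_H(\underline z^1,\underline z^2)=\langle H(\underline z^1),H(\underline z^2)\rangle_{\mathcal Y}$ on $\underline{\mathcal Z}$. Then $\mathbb H$ embeds linearly (injectively) into $\ell^2(\mathcal Z)^*$ via the map sending $f\in\mathbb H$ to the unique linear extension of $f|_{B^2(\mathcal Z)}$ to $\ell^2(\mathcal Z)$, and $\operatorname{span}(H(B^2(\mathcal Z)))$ is dense in $\mathcal Y_0$. Furthermore, if the restriction $H|_{B^2(\mathcal Z)}$ is orthogonal, i.e. $\langle H(\underline z^1),H(\underline z^2)\rangle_{\mathcal Y}=\langle\underline z^1,\underline z^2\rangle_{\ell^2(\mathcal Z)}$ for all $\underline z^1,\underline z^2\in B^2(\mathcal Z)$, then this embedding is an isometric isomorphism of Hilbert spaces $(\mathbb H,\langle\cdot,\cdot\rangle_{\mathbb H})\to(\ell^2(\mathcal Z)^*,\langle\cdot,\cdot\rangle_{\ell^2(\mathcal Z)^*})$, and $\operatorname{span}(H(B^2(\mathcal Z)))=\mathcal Y_0$.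
   Context: $(\mathcal Z,\langle\cdot,\cdot\rangle_{\mathcal Z})$ and $(\mathcal Y,\langle\cdot,\cdot\rangle_{\mathcal Y})$ are real Hilbert spaces with induced norms $\|\cdot\|$, $\|\cdot\|_{\mathcal Y}$; $\mathcal B$ is the closed unit ball of $\mathcal Z$. Let $\mathbb Z_-=\{0,-1,-2,\dots\}$; elements of $\mathcal Z^{\mathbb Z_-}$ are sequences $\underline z=(z_t)_{t\le0}$. For $t\in\mathbb Z_-$, $\delta^t:\mathcal Z\to\mathcal Z^{\mathbb Z_-}$ maps $z$ to the sequence with entry $z$ at time $t$ and $0$ elsewhere. Standing assumption: $\underline{\mathcal Z}\subseteq\mathcal Z^{\mathbb Z_-}$ is a set such that (a) $\underline{\mathcal Z}$ is convex and $\underline{\mathcal Z}=-\underline{\mathcal Z}$; (b) $\delta^t(\mathcal B)\subseteq\underline{\mathcal Z}$ for all $t\in\mathbb Z_-$; (c) for every $\underline z\in\underline{\mathcal Z}$ and $J\subseteq\mathbb Z_-$, the sequence $\sum_{t\in J}\delta^t(z_t)$ (equal to $z_t$ for $t\in J$ and $0$ elsewhere) belongs to $\underline{\mathcal Z}$. A functional $H:\underline{\mathcal Z}\to\mathcal Y$ is linear if it is the restriction of a linear map on $\operatorname{span}(\underline{\mathcal Z})$. $\ell^2(\mathcal Z)$ is the Hilbert space of sequences with $\sum_{t\le0}\|z_t\|^2<\infty$ and inner product $\langle\underline z^1,\underline z^2\rangle_{\ell^2(\mathcal Z)}=\sum_{t\le0}\langle z^1_t,z^2_t\rangle_{\mathcal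 Z}$; $B^2(\mathcal Z)$ is its closed unit ball; $\ell^2(\mathcal Z)^*$ is its continuous dual with the inner product transported via the Riesz representation theorem. $H$ is minimally continuous if $H\circ\delta^t:\mathcal B\to\mathcal Y$ is continuous for every $t$; $H$ has the minimal FMP if $H(\sum_{t=T}^0\delta^t(z_t))\to H(\underline z)$ as $T\to-\infty$ for every $\underline z\in\underline{\mathcal Z}$. *)

theory Defs
  imports "HOL-Analysis.Analysis" "HOL-Library.Function_Algebras"
begin

instantiation "fun" :: (type, real_vector) real_vector
begin
definition scaleR_fun :: "real \<Rightarrow> ('a \<Rightarrow> 'b) \<Rightarrow> 'a \<Rightarrow> 'b"
  where "scaleR_fun c f = (\<lambda>x. c *\<^sub>R f x)"
instance
  by standard (simp_all add: scaleR_fun_def fun_eq_iff plus_fun_def scaleR_add_right scaleR_add_left)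
end

text \<open>A sequence (z_t) for t in Z_- is encoded as a function nat to Z,
  the value at n being z_{-n}.\<close>

type_synonym 'z seq = "nat \<Rightarrow> 'z"

definition delta :: "nat \<Rightarrow> 'z::zero \<Rightarrow> 'z seq" where
  "delta n z = (\<lambda>m. if m = n then z else 0)"

text \<open>Restriction of a sequence to an index set J, i.e. the sum over t in J of delta^t(z_t).\<close>
definition restrict_seq :: "nat set \<Rightarrow> 'z::zero seq \<Rightarrow> 'z seq" where
  "restrict_seq J z = (\<lambda>m. if m \<in> J then z m else 0)"

text \<open>Truncation: the sum from t = -N to 0 of delta^t(z_t).\<close>
definition trunc_seq :: "nat \<Rightarrow> 'z::zero seq \<Rightarrow> 'z seq" where
  "trunc_seq N z = restrict_seq {..N} z"

definition standing_assumption :: "'z::real_normed_vector seq set \<Rightarrow> bool" where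
  "standing_assumption Zs \<longleftrightarrow>
     convex Zs \<and> Zs = uminus ` Zs \<and>
     (\<forall>n. \<forall>z\<in>cball 0 1. delta n z \<in> Zs) \<and>
     (\<forall>z\<in>Zs. \<forall>J. restrict_seq J z \<in> Zs)"

definition linear_functional :: "'z::real_vector seq set \<Rightarrow> ('z seq \<Rightarrow> 'y::real_vector) \<Rightarrow> bool" where
  "linear_functional Zs H \<longleftrightarrow>
     (\<exists>L. (\<forall>x\<in>span Zs. \<forall>y\<in>span Zs. \<forall>a b. L (a *\<^sub>R x + b *\<^sub>R y) = a *\<^sub>R L x + b *\<^sub>R L y)
          \<and> (\<forall>z\<in>Zs. H z = L z))"

definition minimally_continuous :: "('z::real_normed_vector seq \<Rightarrow> 'y::topological_space) \<Rightarrow> bool" where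
  "minimally_continuous H \<longleftrightarrow> (\<forall>n. continuous_on (cball 0 1) (H \<circ> delta n))"

definition minimal_FMP :: "'z::real_normed_vector seq set \<Rightarrow> ('z seq \<Rightarrow> 'y::topological_space) \<Rightarrow> bool" where
  "minimal_FMP Zs H \<longleftrightarrow> (\<forall>z\<in>Zs. (\<lambda>N. H (trunc_seq N z)) \<longlonglongrightarrow> H z)"

definition l2 :: "'z::real_inner seq set" where
  "l2 = {z. summable (\<lambda>n. (norm (z n))\<^sup>2)}"

definition l2_inner :: "'z::real_inner seq \<Rightarrow> 'z seq \<Rightarrow> real" where
  "l2_inner z1 z2 = (\<Sum>n. inner (z1 n) (z2 n))"

definition l2_norm :: "'z::real_inner seq \<Rightarrow> real" where
  "l2_norm z = sqrt (\<Sum>n. (norm (z n))\<^sup>2)"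

definition B2 :: "'z::real_inner seq set" where
  "B2 = {z \<in> l2. l2_norm z \<le> 1}"

text \<open>Continuous linear functionals on l2(Z), represented as real-valued functions
  on sequences that vanish outside l2.\<close>
definition l2_dual :: "('z::real_inner seq \<Rightarrow> real) set" where
  "l2_dual = {L. (\<forall>z. z \<notin> l2 \<longrightarrow> L z = 0)
     \<and> (\<forall>x\<in>l2. \<forall>y\<in>l2. \<forall>a b. L (a *\<^sub>R x + b *\<^sub>R y) = a * L x + b * L y)
     \<and> (\<exists>C. \<forall>z\<in>l2. \<bar>L z\<bar> \<le> C * l2_norm z)}"

definition riesz_rep :: "('z::real_inner seq \<Rightarrow> real) \<Rightarrow> 'z seq" where
  "riesz_rep L = (THE r. r \<in> l2 \<and> (\<forall>z\<in>l2. L z = l2_inner z r))"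

definition l2_dual_inner :: "('z::real_inner seq \<Rightarrow> real) \<Rightarrow> ('z seq \<Rightarrow> real) \<Rightarrow> real" where
  "l2_dual_inner L1 L2 = l2_inner (riesz_rep L1) (riesz_rep L2)"

definition l2_ext :: "('z::real_inner seq \<Rightarrow> real) \<Rightarrow> ('z seq \<Rightarrow> real)" where
  "l2_ext f = (THE L. (\<forall>z. z \<notin> l2 \<longrightarrow> L z = 0)
     \<and> (\<forall>x\<in>l2. \<forall>y\<in>l2. \<forall>a b. L (a *\<^sub>R x + b *\<^sub>R y) = a * L x + b * L y)
     \<and> (\<forall>z\<in>B2. L z = f z))"

text \<open>(F, ip) is a reproducing kernel Hilbert space of real functions on X with kernel K.
  Functions are identified with their extension by 0 outside X.\<close>
definition is_RKHS :: "'a set \<Rightarrow> ('a \<Rightarrow> 'a \<Rightarrow> real) \<Rightarrow> ('a \<Rightarrow> real) set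
                        \<Rightarrow> (('a \<Rightarrow> real) \<Rightarrow> ('a \<Rightarrow> real) \<Rightarrow> real) \<Rightarrow> bool" where
  "is_RKHS X K F ip \<longleftrightarrow>
     (\<forall>f\<in>F. \<forall>x. x \<notin> X \<longrightarrow> f x = 0)
   \<and> subspace F
   \<and> (\<forall>f\<in>F. \<forall>g\<in>F. ip f g = ip g f)
   \<and> (\<forall>f\<in>F. \<forall>g\<in>F. \<forall>h\<in>F. \<forall>a b. ip (a *\<^sub>R f + b *\<^sub>R g) h = a * ip f h + b * ip g h)
   \<and> (\<forall>f\<in>F. ip f f \<ge> 0)
   \<and> (\<forall>f\<in>F. ip f f = 0 \<longrightarrow> f = 0)
   \<and> (\<forall>s. (\<forall>n. s n \<in> F) \<and> (\<forall>e>0. \<exists>M. \<forall>m\<ge>M. \<forall>n\<ge>M. sqrt (ip (s m - s n) (s m - s n)) < e)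
          \<longrightarrow> (\<exists>f\<in>F. (\<lambda>n. sqrt (ip (s n - f) (s n - f))) \<longlonglongrightarrow> 0))
   \<and> (\<forall>x\<in>X. (\<lambda>y. if y \<in> X then K y x else 0) \<in> F)
   \<and> (\<forall>f\<in>F. \<forall>x\<in>X. f x = ip f (\<lambda>y. if y \<in> X then K y x else 0))"

end

theory Submission
  imports Defs
begin


lemma parallelogram:
  fixes x y :: "'a::real_inner"
  shows "(norm (x + y))\<^sup>2 + (norm (x - y))\<^sup>2 = 2 * (norm x)\<^sup>2 + 2 * (norm y)\<^sup>2"
  by (simp add: power2_norm_eq_inner inner_add_left inner_add_right inner_diff_left inner_diff_right inner_commute)

lemma quad_nonneg_zero:
  fixes s c :: real
  assumes c: "c \<ge> 0" and h: "\<forall>t. 2 * t * s + t\<^sup>2 * c \<ge> 0"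
  shows "s = 0"
proof (rule ccontr)
  assume s: "s \<noteq> 0"
  define t where "t = - s / (c + 1)"
  have cp: "c + 1 > 0" using c by simp
  have ht: "t * (c + 1) = - s" unfolding t_def using cp by simp
  have "(c+1)\<^sup>2 * (2 * t * s + t\<^sup>2 * c) = 2 * (t*(c+1)) * s * (c+1) + (t*(c+1))\<^sup>2 * c"
    by (simp add: algebra_simps power2_eq_square)
  also have "\<dots> = s\<^sup>2 * (- c - 2)" unfolding ht by (simp add: algebra_simps power2_eq_square)
  also have "\<dots> < 0" using s c by (intro mult_pos_neg) auto
  finally have "(c+1)\<^sup>2 * (2 * t * s + t\<^sup>2 * c) < 0" .
  then have "2 * t * s + t\<^sup>2 * c < 0" using cp by (simp add: mult_less_0_iff)
  then show False using h by (metis not_le)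
qed
lemma riesz_z:
  fixes \<phi> :: "'z::{real_inner,complete_space} \<Rightarrow> real"
  assumes lin: "linear \<phi>" and bd: "\<And>v. \<bar>\<phi> v\<bar> \<le> C * norm v"
  shows "\<exists>a. \<forall>v. \<phi> v = inner v a"
proof (cases "\<forall>v. \<phi> v = 0")
  case True then show ?thesis by (intro exI[of _ 0]) simp
next
  case False
  then obtain v0 where v0: "\<phi> v0 \<noteq> 0" by auto
  have bl: "bounded_linear \<phi>"
    using lin bd by (intro bounded_linear_intro[where K=C]) (auto simp: linear_add linear_scale mult.commute)
  define A where "A = {v. \<phi> v = 1}"
  have "(v0 /\<^sub>R \<phi> v0) \<in> A" using v0 by (simp add: A_def linear_scale[OF lin])
  then have Ane: "A \<noteq> {}" by auto
  define m where "m = Inf (norm ` A)"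
  have bdd: "bdd_below (norm ` A)" by (rule bdd_belowI[of _ 0]) auto
  have mle: "m \<le> norm w" if "w \<in> A" for w
    unfolding m_def using bdd that by (simp add: cInf_lower)
  have m0: "m \<ge> 0" unfolding m_def using Ane by (intro cInf_greatest) auto
  have "\<exists>v\<in>A. norm v < m + 1 / (Suc k)" for k :: nat
  proof -
    have "Inf (norm ` A) < m + 1 / Suc k" unfolding m_def by simp
    then obtain r where "r \<in> norm ` A" "r < m + 1 / Suc k"
      using cInf_lessD[of "norm ` A"] Ane by blast
    then show ?thesis by auto
  qed
  then obtain v where vA: "\<And>k. v k \<in> A" and vn: "\<And>k. norm (v k) < m + 1 / Suc k"
    by metis
  have key: "(norm (v j - v k))\<^sup>2 \<le> (8 * m + 4) / Suc N" if "j \<ge> N" "k \<ge> N" for j k N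
  proof -
    have mid: "(1/2) *\<^sub>R (v j + v k) \<in> A"
      using vA[of j] vA[of k] by (simp add: A_def linear_add[OF lin] linear_scale[OF lin])
    have "m \<le> norm ((1/2) *\<^sub>R (v j + v k))" by (rule mle[OF mid])
    then have h1: "2 * m \<le> norm (v j + v k)" by simp
    have h2: "(2*m)\<^sup>2 \<le> (norm (v j + v k))\<^sup>2" using h1 m0 by (intro power_mono) auto
    define dj where "dj = 1 / real (Suc j)"
    define dk where "dk = 1 / real (Suc k)"
    have dj: "dj \<le> 1 / Suc N" "dj \<ge> 0" "dj \<le> 1" using that unfolding dj_def by (auto simp: frac_le)
    have dk: "dk \<le> 1 / Suc N" "dk \<ge> 0" "dk \<le> 1" using that unfolding dk_def by (auto simp: frac_le)
    have nj: "(norm (v j))\<^sup>2 \<le> (m + dj)\<^sup>2" using vn[of j] unfolding dj_def by (intro power_mono) auto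
    have nk: "(norm (v k))\<^sup>2 \<le> (m + dk)\<^sup>2" using vn[of k] unfolding dk_def by (intro power_mono) auto
    have "(norm (v j - v k))\<^sup>2 = 2 * (norm (v j))\<^sup>2 + 2 * (norm (v k))\<^sup>2 - (norm (v j + v k))\<^sup>2"
      using parallelogram[of "v j" "v k"] by simp
    also have "\<dots> \<le> 2 * (m + dj)\<^sup>2 + 2 * (m + dk)\<^sup>2 - (2*m)\<^sup>2" using nj nk h2 by simp
    also have "\<dots> = 4*m*dj + 2*dj*dj + 4*m*dk + 2*dk*dk" by (simp add: power2_eq_square algebra_simps)
    also have "\<dots> \<le> 4*m*dj + 2*dj + 4*m*dk + 2*dk"
      using dj dk mult_left_le_one_le[of dj dj] mult_left_le_one_le[of dk dk] by simp
    also have "\<dots> \<le> 4*m*(1/Suc N) + 2*(1/Suc N) + 4*m*(1/Suc N) + 2*(1/Suc N)"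
      using dj dk m0 by (intro add_mono mult_left_mono) auto
    also have "\<dots> = (8 * m + 4) * (1 / Suc N)" by (simp add: algebra_simps)
    also have "\<dots> = (8 * m + 4) / Suc N" by simp
    finally show ?thesis .
  qed
  have "Cauchy v"
  proof (rule metric_CauchyI)
    fix e :: real assume e: "e > 0"
    obtain N :: nat where N: "(8 * m + 4) / e\<^sup>2 < N" using reals_Archimedean2 by blast
    have "(8 * m + 4) / Suc N < e\<^sup>2"
    proof -
      have "(8*m+4) < N * e\<^sup>2" using N e by (simp add: field_simps)
      also have "\<dots> \<le> Suc N * e\<^sup>2" using e by (intro mult_right_mono) auto
      finally show ?thesis by (simp add: field_simps)
    qed
    then have "\<forall>j\<ge>N. \<forall>k\<ge>N. dist (v j) (v k) < e"
    proof (intro allI impI)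
      fix j k assume jk: "j \<ge> N" "k \<ge> N" and lt: "(8 * m + 4) / Suc N < e\<^sup>2"
      have "(norm (v j - v k))\<^sup>2 < e\<^sup>2" using key[OF jk] lt by linarith
      then show "dist (v j) (v k) < e" using e by (simp add: dist_norm power2_less_imp_less)
    qed
    then show "\<exists>M. \<forall>j\<ge>M. \<forall>k\<ge>M. dist (v j) (v k) < e" by blast
  qed
  then obtain u where vu: "v \<longlonglongrightarrow> u" using Cauchy_convergent_iff convergent_def by blast
  have "(\<lambda>k. \<phi> (v k)) \<longlonglongrightarrow> \<phi> u" by (rule bounded_linear.tendsto[OF bl vu])
  moreover have "(\<lambda>k. \<phi> (v k)) = (\<lambda>k. 1)" using vA by (auto simp: A_def)
  ultimately have phiu: "\<phi> u = 1" using LIMSEQ_unique tendsto_const by metis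
  have lim: "(\<lambda>k. m + 1 / real (Suc k)) \<longlonglongrightarrow> m"
    using tendsto_add[OF tendsto_const[of m] LIMSEQ_Suc[OF lim_inverse_n']] by simp
  have "\<forall>k. norm (v k) \<le> m + 1 / Suc k" using vn less_imp_le by blast
  then have ev: "\<forall>\<^sub>F k in sequentially. norm (v k) \<le> m + 1 / Suc k" by (rule always_eventually)
  have unm: "norm u \<le> m" by (rule tendsto_le[OF sequentially_bot lim tendsto_norm[OF vu] ev])
  have orth: "inner u w = 0" if w: "\<phi> w = 0" for w
  proof (rule quad_nonneg_zero[of "(norm w)\<^sup>2"])
    show "\<forall>t. 2 * t * inner u w + t\<^sup>2 * (norm w)\<^sup>2 \<ge> 0"
    proof
      fix t :: real
      have "u + t *\<^sub>R w \<in> A" using phiu w by (simp add: A_def linear_add[OF lin] linear_scale[OF lin])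
      then have "norm u \<le> norm (u + t *\<^sub>R w)" using mle unm by fastforce
      then have "(norm u)\<^sup>2 \<le> (norm (u + t *\<^sub>R w))\<^sup>2" by (intro power_mono) auto
      also have "(norm (u + t *\<^sub>R w))\<^sup>2 = (norm u)\<^sup>2 + 2 * t * inner u w + t\<^sup>2 * (norm w)\<^sup>2"
        unfolding power2_norm_eq_inner by (simp add: inner_add_left inner_add_right inner_commute power2_eq_square algebra_simps)
      finally show "2 * t * inner u w + t\<^sup>2 * (norm w)\<^sup>2 \<ge> 0" by simp
    qed
  qed simp
  have u0: "u \<noteq> 0" using phiu linear_0[OF lin] by auto
  then have nu: "(norm u)\<^sup>2 \<noteq> 0" by simp
  show ?thesis
  proof (intro exI allI)
    fix v
    have "\<phi> (v - \<phi> v *\<^sub>R u) = 0" using phiu by (simp add: linear_diff[OF lin] linear_scale[OF lin])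
    then have "inner u (v - \<phi> v *\<^sub>R u) = 0" by (rule orth)
    then have "inner v u = \<phi> v * (norm u)\<^sup>2"
      by (simp add: inner_diff_right power2_norm_eq_inner inner_commute)
    then show "\<phi> v = inner v (u /\<^sub>R (norm u)\<^sup>2)" using nu by (simp add: field_simps)
  qed
qed




lemma scaleR_fun_apply [simp]: "(c *\<^sub>R f) x = c *\<^sub>R f x"
  by (simp add: scaleR_fun_def)

lemma l2_iff: "z \<in> l2 \<longleftrightarrow> summable (\<lambda>n. (norm (z n))\<^sup>2)" by (simp add: l2_def)

lemma l2_add: assumes "x \<in> l2" "y \<in> l2" shows "x + y \<in> l2"
proof -
  have s1: "summable (\<lambda>n. (norm (x n))\<^sup>2)" and s2: "summable (\<lambda>n. (norm (y n))\<^sup>2)"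
    using assms by (simp_all add: l2_iff)
  have s: "summable (\<lambda>n. 2 * (norm (x n))\<^sup>2 + 2 * (norm (y n))\<^sup>2)"
    by (rule summable_add[OF summable_mult[OF s1] summable_mult[OF s2]])
  have b: "norm ((norm ((x + y) n))\<^sup>2) \<le> 2 * (norm (x n))\<^sup>2 + 2 * (norm (y n))\<^sup>2" for n
  proof -
    have "norm ((norm ((x + y) n))\<^sup>2) = (norm (x n + y n))\<^sup>2" by simp
    then show ?thesis using parallelogram[of "x n" "y n"] zero_le_power2[of "norm (x n - y n)"] by linarith
  qed
  have "summable (\<lambda>n. (norm ((x + y) n))\<^sup>2)"
    by (rule summable_comparison_test'[OF s, where N=0]) (rule b)
  then show ?thesis by (simp add: l2_iff)
qed

lemma l2_scale: assumes "x \<in> l2" shows "c *\<^sub>R x \<in> l2"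
proof -
  have s1: "summable (\<lambda>n. (norm (x n))\<^sup>2)" using assms by (simp add: l2_iff)
  have "summable (\<lambda>n. c\<^sup>2 * (norm (x n))\<^sup>2)" by (rule summable_mult[OF s1])
  then show ?thesis by (simp add: l2_iff power_mult_distrib)
qed
lemma l2_zero: "0 \<in> l2" by (simp add: l2_iff)

lemma l2_lin: "x \<in> l2 \<Longrightarrow> y \<in> l2 \<Longrightarrow> a *\<^sub>R x + b *\<^sub>R y \<in> l2"
  by (intro l2_add l2_scale)

lemma l2_diff: "x \<in> l2 \<Longrightarrow> y \<in> l2 \<Longrightarrow> x - y \<in> l2"
  using l2_lin[of x y 1 "-1"] by (simp add: algebra_simps)

lemma l2_finite_support: assumes "\<And>n. n > N \<Longrightarrow> z n = 0" shows "z \<in> l2"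
  unfolding l2_iff by (rule summable_finite[of "{..N}"]) (auto simp: assms not_le)

lemma delta_l2: "delta n v \<in> l2"
  by (rule l2_finite_support[of n]) (simp add: delta_def)

lemma trunc_l2: "trunc_seq N z \<in> l2"
  by (rule l2_finite_support[of N]) (simp add: trunc_seq_def restrict_seq_def)

lemma summable_inner: assumes "x \<in> l2" "y \<in> l2" shows "summable (\<lambda>n. inner (x n) (y n))"
proof -
  have s: "summable (\<lambda>n. (norm (x n))\<^sup>2 + (norm (y n))\<^sup>2)"
    using assms by (intro summable_add) (auto simp: l2_iff)
  have "norm (inner (x n) (y n)) \<le> (norm (x n))\<^sup>2 + (norm (y n))\<^sup>2" for n
  proof -
    have "norm (inner (x n) (y n)) \<le> norm (x n) * norm (y n)" using Cauchy_Schwarz_ineq2 by simp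
    also have "\<dots> \<le> (norm (x n))\<^sup>2 + (norm (y n))\<^sup>2" 
    proof -
      have "0 \<le> norm (x n) * norm (y n)" by simp
      then show ?thesis using sum_squares_bound[of "norm (x n)" "norm (y n)"] by linarith
    qed
    finally show ?thesis .
  qed
  then show ?thesis by (intro summable_comparison_test'[OF s, where N=0]) auto
qed

lemma l2_inner_sums: "x \<in> l2 \<Longrightarrow> y \<in> l2 \<Longrightarrow> (\<lambda>n. inner (x n) (y n)) sums l2_inner x y"
  unfolding l2_inner_def by (intro summable_sums summable_inner)

lemma l2_inner_commute: "l2_inner x y = l2_inner y x"
  unfolding l2_inner_def by (simp add: inner_commute)

lemma l2_inner_lin:
  assumes "x \<in> l2" "y \<in> l2" "z \<in> l2"
  shows "l2_inner (a *\<^sub>R x + b *\<^sub>R y) z = a * l2_inner x z + b * l2_inner y z"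
proof -
  have "(\<lambda>n. a * inner (x n) (z n) + b * inner (y n) (z n)) sums (a * l2_inner x z + b * l2_inner y z)"
    using assms by (intro sums_add sums_mult l2_inner_sums)
  then show ?thesis unfolding l2_inner_def by (simp add: inner_add_left sums_iff)
qed

lemma l2_inner_lin2:
  assumes "x \<in> l2" "y \<in> l2" "z \<in> l2"
  shows "l2_inner z (a *\<^sub>R x + b *\<^sub>R y) = a * l2_inner z x + b * l2_inner z y"
  using l2_inner_lin[OF assms] by (simp add: l2_inner_commute)

lemma l2_inner_self: assumes "x \<in> l2" shows "l2_inner x x = (l2_norm x)\<^sup>2"
proof -
  have s: "summable (\<lambda>n. (norm (x n))\<^sup>2)" using assms by (simp add: l2_iff)
  have "0 \<le> (\<Sum>n. (norm (x n))\<^sup>2)" using suminf_nonneg[OF s] by simp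
  have "l2_inner x x = (\<Sum>n. (norm (x n))\<^sup>2)" unfolding l2_inner_def by (simp add: power2_norm_eq_inner)
  then show ?thesis unfolding l2_norm_def using \<open>0 \<le> (\<Sum>n. (norm (x n))\<^sup>2)\<close> real_sqrt_pow2 by metis
qed

lemma l2_norm_nonneg: assumes "x \<in> l2" shows "l2_norm x \<ge> 0"
proof -
  have s: "summable (\<lambda>n. (norm (x n))\<^sup>2)" using assms by (simp add: l2_iff)
  have "0 \<le> (\<Sum>n. (norm (x n))\<^sup>2)" using suminf_nonneg[OF s] by simp
  then show ?thesis by (simp add: l2_norm_def)
qed

lemma l2_inner_self_nonneg: "x \<in> l2 \<Longrightarrow> l2_inner x x \<ge> 0"
  by (simp add: l2_inner_self)

lemma quad_discr:
  fixes A B C :: real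
  assumes h: "\<forall>t. A + 2 * t * B + t\<^sup>2 * C \<ge> 0" and C: "C \<ge> 0"
  shows "B\<^sup>2 \<le> A * C"
proof (cases "C = 0")
  case True
  have "B = 0"
  proof (rule ccontr)
    assume "B \<noteq> 0"
    have "A + 2 * (- (A + 1) / (2 * B)) * B + (- (A + 1) / (2 * B))\<^sup>2 * C \<ge> 0" using h[rule_format, of "- (A + 1) / (2 * B)"] .
    then have "A + 2 * (- (A + 1) / (2 * B)) * B \<ge> 0" using True by simp
    moreover have "A + 2 * (- (A + 1) / (2 * B)) * B = -1" using \<open>B \<noteq> 0\<close> by (simp add: field_simps)
    ultimately show False by simp
  qed
  then show ?thesis using True by simp
next
  case False
  then have Cp: "C > 0" using C by simp
  have "A + 2 * (- B / C) * B + (- B / C)\<^sup>2 * C \<ge> 0" using h[rule_format, of "- B / C"] .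
  moreover have "A + 2 * (- B / C) * B + (- B / C)\<^sup>2 * C = A - B\<^sup>2 / C"
    using Cp by (simp add: field_simps power2_eq_square)
  ultimately have "B\<^sup>2 / C \<le> A" by simp
  then show ?thesis using Cp by (simp add: field_simps)
qed

lemma l2_CS: assumes "x \<in> l2" "y \<in> l2" shows "\<bar>l2_inner x y\<bar> \<le> l2_norm x * l2_norm y"
proof -
  have "\<forall>t. l2_inner x x + 2 * t * l2_inner x y + t\<^sup>2 * l2_inner y y \<ge> 0"
  proof
    fix t :: real
    have xy: "1 *\<^sub>R x + t *\<^sub>R y \<in> l2" using assms by (intro l2_lin)
    have "l2_inner (1 *\<^sub>R x + t *\<^sub>R y) (1 *\<^sub>R x + t *\<^sub>R y)
        = 1 * l2_inner x (1 *\<^sub>R x + t *\<^sub>R y) + t * l2_inner y (1 *\<^sub>R x + t *\<^sub>R y)"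
      by (rule l2_inner_lin[OF assms xy])
    also have "\<dots> = l2_inner x x + 2 * t * l2_inner x y + t\<^sup>2 * l2_inner y y"
    proof -
      have "l2_inner x (1 *\<^sub>R x + t *\<^sub>R y) = 1 * l2_inner x x + t * l2_inner x y"
        by (rule l2_inner_lin2[OF assms(1) assms(2) assms(1)])
      moreover have "l2_inner y (1 *\<^sub>R x + t *\<^sub>R y) = 1 * l2_inner y x + t * l2_inner y y"
        by (rule l2_inner_lin2[OF assms(1) assms(2) assms(2)])
      ultimately show ?thesis by (simp add: l2_inner_commute[of y x] algebra_simps power2_eq_square)
    qed
    finally show "l2_inner x x + 2 * t * l2_inner x y + t\<^sup>2 * l2_inner y y \<ge> 0"
      using l2_inner_self_nonneg[OF xy] by simp
  qed
  then have "(l2_inner x y)\<^sup>2 \<le> l2_inner x x * l2_inner y y"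
    by (rule quad_discr[OF _ l2_inner_self_nonneg[OF assms(2)]])
  also have "\<dots> = (l2_norm x * l2_norm y)\<^sup>2" using assms by (simp add: l2_inner_self power_mult_distrib)
  finally have "\<bar>l2_inner x y\<bar>\<^sup>2 \<le> (l2_norm x * l2_norm y)\<^sup>2" by simp
  then show ?thesis
    by (rule power2_le_imp_le) (rule mult_nonneg_nonneg[OF l2_norm_nonneg[OF assms(1)] l2_norm_nonneg[OF assms(2)]])
qed

lemma l2_norm_scale: "x \<in> l2 \<Longrightarrow> l2_norm (c *\<^sub>R x) = \<bar>c\<bar> * l2_norm x"
  unfolding l2_norm_def
  by (simp add: power_mult_distrib suminf_mult l2_iff real_sqrt_mult)

lemma l2_norm_delta: "l2_norm (delta n v) = norm v"
proof -
  have "(\<lambda>m. (norm (delta n v m))\<^sup>2) = (\<lambda>m. if m = n then (norm v)\<^sup>2 else 0)"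
    by (auto simp: delta_def)
  moreover have "(\<lambda>m. if m = n then (norm v)\<^sup>2 else 0) sums (norm v)\<^sup>2"
    using sums_single[of n "\<lambda>_. (norm v)\<^sup>2"] by simp
  ultimately show ?thesis by (simp add: l2_norm_def sums_iff)
qed

lemma B2_decomp: assumes "x \<in> l2" shows "\<exists>c b. b \<in> B2 \<and> x = c *\<^sub>R b"
proof (cases "l2_norm x = 0")
  case True
  have "0 \<in> B2" by (simp add: B2_def l2_zero l2_norm_def)
  moreover have "x = 0"
  proof -
    have "(\<Sum>n. (norm (x n))\<^sup>2) = 0" using True by (simp add: l2_norm_def)
    then have "\<forall>n. (norm (x n))\<^sup>2 = 0" using assms
      by (subst (asm) suminf_eq_zero_iff) (auto simp: l2_iff)
    then show ?thesis by auto
  qed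
  ultimately show ?thesis by (intro exI[of _ 0] exI[of _ 0]) simp
next
  case False
  then have p: "l2_norm x > 0" using l2_norm_nonneg[OF assms] by simp
  have "(1 / l2_norm x) *\<^sub>R x \<in> B2"
    using assms p by (simp add: B2_def l2_scale l2_norm_scale)
  moreover have "x = l2_norm x *\<^sub>R ((1 / l2_norm x) *\<^sub>R x)" using p by simp
  ultimately show ?thesis by blast
qed

lemma B2_l2: "b \<in> B2 \<Longrightarrow> b \<in> l2" by (simp add: B2_def)

lemma trunc_Suc: fixes z :: "'a::real_vector seq" shows "trunc_seq (Suc N) z = trunc_seq N z + delta (Suc N) (z (Suc N))"
  by (auto simp: trunc_seq_def restrict_seq_def delta_def fun_eq_iff)

lemma trunc_0: fixes z :: "'a::real_vector seq" shows "trunc_seq 0 z = delta 0 (z 0)"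
  by (auto simp: trunc_seq_def restrict_seq_def delta_def fun_eq_iff)

lemma delta_lin: "delta n (a *\<^sub>R v + b *\<^sub>R w) = a *\<^sub>R delta n v + b *\<^sub>R delta n w"
  by (auto simp: delta_def fun_eq_iff)

lemma trunc_scale: "trunc_seq N (c *\<^sub>R z) = c *\<^sub>R trunc_seq N z"
  by (auto simp: trunc_seq_def restrict_seq_def fun_eq_iff)

lemma D_trunc:
  assumes lin: "\<forall>x\<in>l2. \<forall>y\<in>l2. \<forall>a b. D (a *\<^sub>R x + b *\<^sub>R y) = a * D x + b * D y"
  shows "D (trunc_seq N z) = (\<Sum>n\<le>N. D (delta n (z n)))"
proof (induction N)
  case 0 then show ?case by (simp add: trunc_0)
next
  case (Suc N)
  have "D (trunc_seq (Suc N) z) = D (1 *\<^sub>R trunc_seq N z + 1 *\<^sub>R delta (Suc N) (z (Suc N)))"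
    by (simp add: trunc_Suc)
  also have "\<dots> = D (trunc_seq N z) + D (delta (Suc N) (z (Suc N)))"
  proof -
    have "D (1 *\<^sub>R trunc_seq N z + 1 *\<^sub>R delta (Suc N) (z (Suc N))) = 1 * D (trunc_seq N z) + 1 * D (delta (Suc N) (z (Suc N)))"
      using lin trunc_l2 delta_l2 by blast
    then show ?thesis by simp
  qed
  finally show ?case using Suc by simp
qed

lemma l2_tail: assumes "z \<in> l2" shows "(\<lambda>N. l2_norm (z - trunc_seq N z)) \<longlonglongrightarrow> 0"
proof -
  define f where "f n = (norm (z n))\<^sup>2" for n
  have sf: "summable f" using assms by (simp add: f_def[abs_def] l2_iff)
  have eq: "(\<Sum>m. (norm ((z - trunc_seq N z) m))\<^sup>2) = suminf f - (\<Sum>n\<le>N. f n)" for N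
  proof -
    have "(\<lambda>m. if m \<in> {..N} then f m else 0) sums (\<Sum>n\<in>{..N}. f n)"
      by (rule sums_If_finite_set) simp
    then have "(\<lambda>m. f m - (if m \<in> {..N} then f m else 0)) sums (suminf f - (\<Sum>n\<le>N. f n))"
      using sf by (intro sums_diff) auto
    moreover have "(\<lambda>m. f m - (if m \<in> {..N} then f m else 0)) = (\<lambda>m. (norm ((z - trunc_seq N z) m))\<^sup>2)"
      by (auto simp: f_def trunc_seq_def restrict_seq_def fun_eq_iff)
    ultimately show ?thesis by (simp add: sums_iff)
  qed
  have "(\<lambda>N. suminf f - (\<Sum>n\<le>N. f n)) \<longlonglongrightarrow> suminf f - suminf f"
    by (intro tendsto_diff tendsto_const summable_LIMSEQ' sf)
  then have "(\<lambda>N. sqrt (suminf f - (\<Sum>n\<le>N. f n))) \<longlonglongrightarrow> sqrt 0"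
    by (intro tendsto_real_sqrt) simp
  then show ?thesis unfolding l2_norm_def eq by simp
qed




lemma abel_dini:
  fixes a :: "nat \<Rightarrow> 'z::real_inner"
  assumes conv: "\<forall>z\<in>l2. summable (\<lambda>n. inner (z n) (a n))"
  shows "a \<in> l2"
proof (rule ccontr)
  assume na: "a \<notin> l2"
  define b where "b n = (norm (a n))\<^sup>2" for n
  define S where "S n = (\<Sum>i<n. b i)" for n
  have b0: "b n \<ge> 0" for n by (simp add: b_def)
  have nsb: "\<not> summable b" using na by (simp add: l2_iff b_def[abs_def])
  have unb: "\<exists>n. S n > M" for M
  proof (rule ccontr)
    assume "\<not> (\<exists>n. S n > M)"
    then have "\<And>n. (\<Sum>i<n. b i) \<le> M" by (auto simp: S_def not_less)
    then have "summable b" using b0 by (intro summableI_nonneg_bounded) auto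
    then show False using nsb by simp
  qed
  have Smono: "S n \<le> S m" if "n \<le> m" for n m
    unfolding S_def using that b0 by (intro sum_mono2) auto
  have SSuc: "S (Suc n) = S n + b n" for n by (simp add: S_def)
  have S0: "S n \<ge> 0" for n using Smono[of 0 n] by (simp add: S_def)
  define z where "z n = (1 / S (Suc n)) *\<^sub>R a n" for n
  obtain n0 where n0: "S n0 > 0" using unb[of 0] by blast
  define g where "g n = 1 / S n - 1 / S (Suc n)" for n
  have g_bound: "(norm (z n))\<^sup>2 \<le> g n" if "n \<ge> n0" for n
  proof -
    have Sp: "S n > 0" using Smono[OF that] n0 by simp
    have Sp': "S (Suc n) > 0" using Sp SSuc[of n] b0[of n] by simp
    have "(norm (z n))\<^sup>2 = b n / (S (Suc n))\<^sup>2"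
      by (simp add: z_def b_def power_divide power_mult_distrib abs_of_pos[OF Sp'] divide_inverse power_inverse)
    also have "\<dots> \<le> b n / (S n * S (Suc n))"
      using Sp Sp' b0[of n] Smono[of n "Suc n"]
      by (intro divide_left_mono mult_pos_pos) (auto simp: power2_eq_square intro: mult_right_mono)
    also have "\<dots> = g n" using Sp Sp' by (simp add: g_def SSuc field_simps)
    finally show ?thesis .
  qed
  have g0: "g n \<ge> 0" if "n \<ge> n0" for n
    using g_bound[OF that] zero_le_power2[of "norm (z n)"] by linarith
  have "summable (\<lambda>i. g (i + n0))"
  proof (rule summableI_nonneg_bounded)
    show "0 \<le> g (i + n0)" for i using g0 by simp
    show "(\<Sum>i<N. g (i + n0)) \<le> 1 / S n0" for N
    proof -
      have "(\<Sum>i<N. g (i + n0)) = (\<Sum>i<N. 1 / S (i + n0) - 1 / S (Suc i + n0))"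
        by (simp add: g_def)
      also have "\<dots> = 1 / S (0 + n0) - 1 / S (N + n0)"
        by (rule sum_lessThan_telescope'[of "\<lambda>i. 1 / S (i + n0)"])
      also have "\<dots> \<le> 1 / S n0" using S0[of "N + n0"] by simp
      finally show ?thesis .
    qed
  qed
  then have sg: "summable g" by simp
  have zl2: "z \<in> l2"
    unfolding l2_iff
    by (rule summable_comparison_test'[OF sg, where N=n0]) (simp add: g_bound)
  have f_eq: "inner (z n) (a n) = b n / S (Suc n)" for n
    by (simp add: z_def b_def power2_norm_eq_inner)
  have "summable (\<lambda>n. inner (z n) (a n))" using conv zl2 by blast
  then have sf: "summable (\<lambda>n. b n / S (Suc n))" using f_eq by simp
  obtain N where N: "\<forall>m\<ge>N. \<forall>n. norm (\<Sum>i\<in>{m..<n}. b i / S (Suc i)) < 1/2"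
  proof -
    have "\<forall>e>0. \<exists>N. \<forall>m\<ge>N. \<forall>n. norm (\<Sum>i\<in>{m..<n}. b i / S (Suc i)) < e"
      using sf unfolding summable_Cauchy .
    then have "\<exists>N. \<forall>m\<ge>N. \<forall>n. norm (\<Sum>i\<in>{m..<n}. b i / S (Suc i)) < 1/2"
      by (meson half_gt_zero zero_less_one)
    then show ?thesis using that by blast
  qed
  obtain k where k: "S k > 2 * S N + 1" using unb by blast
  have Nk: "N \<le> k"
  proof (rule ccontr)
    assume "\<not> N \<le> k"
    then have "S k \<le> S N" using Smono by simp
    then show False using k S0[of N] by simp
  qed
  have Skp: "S k > 0" using k S0[of N] by simp
  have "(\<Sum>i\<in>{N..<k}. b i / S k) \<le> (\<Sum>i\<in>{N..<k}. b i / S (Suc i))"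
  proof (rule sum_mono)
    fix i assume i: "i \<in> {N..<k}"
    show "b i / S k \<le> b i / S (Suc i)"
    proof (cases "S (Suc i) = 0")
      case True
      then have "b i = 0" using SSuc[of i] S0[of i] b0[of i] by simp
      then show ?thesis by simp
    next
      case False
      then have "S (Suc i) > 0" using S0[of "Suc i"] by simp
      moreover have "S (Suc i) \<le> S k" using i by (intro Smono) auto
      ultimately show ?thesis using b0[of i] by (intro divide_left_mono) auto
    qed
  qed
  moreover have "(\<Sum>i\<in>{N..<k}. b i / S k) = (S k - S N) / S k"
  proof -
    have "(\<Sum>i\<in>{N..<k}. b i) = S k - S N"
      unfolding S_def using sum_diff_nat_ivl[of 0 N k b] Nk by (simp add: atLeast0LessThan)
    then show ?thesis by (simp add: sum_divide_distrib[symmetric])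
  qed
  moreover have "(S k - S N) / S k \<ge> 1/2" using Skp k S0[of N] by (simp add: field_simps)
  ultimately have "(\<Sum>i\<in>{N..<k}. b i / S (Suc i)) \<ge> 1/2" by linarith
  moreover have "norm (\<Sum>i\<in>{N..<k}. b i / S (Suc i)) < 1/2" using N by simp
  ultimately show False by simp
qed

lemma coord_rep:
  fixes D :: "'z::{real_inner,complete_space} seq \<Rightarrow> real"
  assumes lin: "\<forall>x\<in>l2. \<forall>y\<in>l2. \<forall>a b. D (a *\<^sub>R x + b *\<^sub>R y) = a * D x + b * D y"
    and conv: "\<forall>z\<in>l2. (\<lambda>N. D (trunc_seq N z)) \<longlonglongrightarrow> D z"
    and cb: "\<forall>n. \<exists>C. \<forall>v. \<bar>D (delta n v)\<bar> \<le> C * norm v"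
  shows "\<exists>a\<in>l2. \<forall>z\<in>l2. D z = l2_inner z a"
proof -
  have "\<exists>a. \<forall>v. D (delta n v) = inner v a" for n
  proof -
    obtain C where C: "\<forall>v. \<bar>D (delta n v)\<bar> \<le> C * norm v" using cb by blast
    have "linear (\<lambda>v. D (delta n v))"
    proof (rule linearI)
      fix v w :: 'z
      have "D (1 *\<^sub>R delta n v + 1 *\<^sub>R delta n w) = 1 * D (delta n v) + 1 * D (delta n w)"
        using lin delta_l2 by blast
      moreover have "delta n (v + w) = 1 *\<^sub>R delta n v + 1 *\<^sub>R delta n w"
        using delta_lin[of n 1 v 1 w] by simp
      ultimately show "D (delta n (v + w)) = D (delta n v) + D (delta n w)" by simp
    next
      fix c :: real and v :: 'z
      have "D (c *\<^sub>R delta n v + 0 *\<^sub>R delta n v) = c * D (delta n v) + 0 * D (delta n v)"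
        using lin delta_l2 by blast
      moreover have "delta n (c *\<^sub>R v) = c *\<^sub>R delta n v + 0 *\<^sub>R delta n v"
        using delta_lin[of n c v 0 v] by simp
      ultimately show "D (delta n (c *\<^sub>R v)) = c *\<^sub>R D (delta n v)" by simp
    qed
    then show ?thesis using riesz_z[of "\<lambda>v. D (delta n v)" C] C by blast
  qed
  then obtain a where a: "\<And>n v. D (delta n v) = inner v (a n)" by metis
  have sums: "(\<lambda>n. inner (z n) (a n)) sums D z" if z: "z \<in> l2" for z
  proof -
    have "(\<lambda>N. D (trunc_seq N z)) \<longlonglongrightarrow> D z" using conv z by blast
    moreover have "D (trunc_seq N z) = (\<Sum>n<Suc N. inner (z n) (a n))" for N
      using D_trunc[OF lin, of N z] a by (simp add: lessThan_Suc_atMost)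
    ultimately have "(\<lambda>N. (\<Sum>n<Suc N. inner (z n) (a n))) \<longlonglongrightarrow> D z" by simp
    then show ?thesis unfolding sums_def by (rule LIMSEQ_imp_Suc)
  qed
  have al2: "a \<in> l2" by (rule abel_dini) (use sums sums_summable in blast)
  show ?thesis
  proof (intro bexI[OF _ al2] ballI)
    fix z :: "'z seq" assume "z \<in> l2"
    then show "D z = l2_inner z a" unfolding l2_inner_def using sums sums_unique by blast
  qed
qed




lemma l2_norm_zero: assumes "x \<in> l2" "l2_norm x = 0" shows "x = 0"
proof -
  have "(\<Sum>n. (norm (x n))\<^sup>2) = 0" using assms(2) by (simp add: l2_norm_def)
  then have "\<forall>n. (norm (x n))\<^sup>2 = 0" using assms(1)
    by (subst (asm) suminf_eq_zero_iff) (auto simp: l2_iff)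
  then show ?thesis by auto
qed

definition Rf :: "'z::real_inner seq \<Rightarrow> 'z seq \<Rightarrow> real" where
  "Rf a = (\<lambda>z. if z \<in> l2 then l2_inner z a else 0)"

lemma l2_ext_eq:
  assumes out: "\<forall>z. z \<notin> l2 \<longrightarrow> G z = 0"
    and lin: "\<forall>x\<in>l2. \<forall>y\<in>l2. \<forall>a b. G (a *\<^sub>R x + b *\<^sub>R y) = a * G x + b * G y"
    and agree: "\<forall>z\<in>B2. G z = f z"
  shows "l2_ext f = G"
  unfolding l2_ext_def
proof (rule the_equality)
  show "(\<forall>z. z \<notin> l2 \<longrightarrow> G z = 0) \<and> (\<forall>x\<in>l2. \<forall>y\<in>l2. \<forall>a b. G (a *\<^sub>R x + b *\<^sub>R y) = a * G x + b * G y) \<and> (\<forall>z\<in>B2. G z = f z)"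
    using assms by blast
next
  fix G' assume G': "(\<forall>z. z \<notin> l2 \<longrightarrow> G' z = 0) \<and> (\<forall>x\<in>l2. \<forall>y\<in>l2. \<forall>a b. G' (a *\<^sub>R x + b *\<^sub>R y) = a * G' x + b * G' y) \<and> (\<forall>z\<in>B2. G' z = f z)"
  show "G' = G"
  proof
    fix z
    show "G' z = G z"
    proof (cases "z \<in> l2")
      case False then show ?thesis using G' out by simp
    next
      case True
      then obtain c b where b: "b \<in> B2" and z: "z = c *\<^sub>R b" using B2_decomp by blast
      have bl: "b \<in> l2" by (rule B2_l2[OF b])
      have "G' (c *\<^sub>R b + 0 *\<^sub>R b) = c * G' b + 0 * G' b" using G' bl by blast
      moreover have "G (c *\<^sub>R b + 0 *\<^sub>R b) = c * G b + 0 * G b" using lin bl by blast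
      ultimately show ?thesis using z b G' agree by simp
    qed
  qed
qed

lemma Rf_lin: "x \<in> l2 \<Longrightarrow> y \<in> l2 \<Longrightarrow> a \<in> l2 \<Longrightarrow> Rf a (\<alpha> *\<^sub>R x + \<beta> *\<^sub>R y) = \<alpha> * Rf a x + \<beta> * Rf a y"
  unfolding Rf_def by (simp add: l2_lin l2_inner_lin)

lemma Rf_dual: assumes a: "a \<in> l2" shows "Rf a \<in> l2_dual"
  unfolding l2_dual_def
proof (intro CollectI conjI allI impI ballI)
  show "\<And>z. z \<notin> l2 \<Longrightarrow> Rf a z = 0" by (simp add: Rf_def)
  show "\<And>x y aa b. x \<in> l2 \<Longrightarrow> y \<in> l2 \<Longrightarrow> Rf a (aa *\<^sub>R x + b *\<^sub>R y) = aa * Rf a x + b * Rf a y"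
    using Rf_lin a by blast
  show "\<exists>C. \<forall>z\<in>l2. \<bar>Rf a z\<bar> \<le> C * l2_norm z"
    using l2_CS[OF _ a] by (intro exI[of _ "l2_norm a"]) (simp add: Rf_def mult.commute)
qed

lemma riesz_rep_Rf: assumes a: "a \<in> l2" shows "riesz_rep (Rf a) = a"
  unfolding riesz_rep_def
proof (rule the_equality)
  show "a \<in> l2 \<and> (\<forall>z\<in>l2. Rf a z = l2_inner z a)" using a by (simp add: Rf_def)
next
  fix r assume r: "r \<in> l2 \<and> (\<forall>z\<in>l2. Rf a z = l2_inner z r)"
  have d: "r - a \<in> l2" using r a by (simp add: l2_diff)
  have "l2_inner (r - a) r = l2_inner (r - a) a" using r d by (simp add: Rf_def)
  moreover have "l2_inner (r - a) (1 *\<^sub>R r + (-1) *\<^sub>R a) = 1 * l2_inner (r - a) r + (-1) * l2_inner (r - a) a"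
    using r a d by (intro l2_inner_lin2) auto
  ultimately have "l2_inner (r - a) (r - a) = 0" by simp
  then have "l2_norm (r - a) = 0" using l2_inner_self[OF d] by simp
  then have "r - a = 0" using l2_norm_zero[OF d] by simp
  then show "r = a" by simp
qed

lemma dual_rep:
  fixes D :: "'z::{real_inner,complete_space} seq \<Rightarrow> real"
  assumes D: "D \<in> l2_dual" shows "\<exists>r\<in>l2. D = Rf r"
proof -
  have out: "\<forall>z. z \<notin> l2 \<longrightarrow> D z = 0"
    and lin: "\<forall>x\<in>l2. \<forall>y\<in>l2. \<forall>a b. D (a *\<^sub>R x + b *\<^sub>R y) = a * D x + b * D y"
    using D by (auto simp: l2_dual_def)
  obtain C where C: "\<forall>z\<in>l2. \<bar>D z\<bar> \<le> C * l2_norm z" using D by (auto simp: l2_dual_def)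
  have conv: "\<forall>z\<in>l2. (\<lambda>N. D (trunc_seq N z)) \<longlonglongrightarrow> D z"
  proof
    fix z :: "'z seq" assume z: "z \<in> l2"
    have "(\<lambda>N. D (trunc_seq N z) - D z) \<longlonglongrightarrow> 0"
    proof (rule Lim_null_comparison)
      show "\<forall>\<^sub>F N in sequentially. norm (D (trunc_seq N z) - D z) \<le> C * l2_norm (z - trunc_seq N z)"
      proof (intro always_eventually allI)
        fix N
        have t: "trunc_seq N z \<in> l2" by (rule trunc_l2)
        have "D (1 *\<^sub>R z + (-1) *\<^sub>R trunc_seq N z) = 1 * D z + (-1) * D (trunc_seq N z)"
          using lin z t by blast
        then have "D (z - trunc_seq N z) = D z - D (trunc_seq N z)" by simp
        moreover have "\<bar>D (z - trunc_seq N z)\<bar> \<le> C * l2_norm (z - trunc_seq N z)"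
          using C l2_diff[OF z t] by blast
        ultimately show "norm (D (trunc_seq N z) - D z) \<le> C * l2_norm (z - trunc_seq N z)" by simp
      qed
      show "(\<lambda>N. C * l2_norm (z - trunc_seq N z)) \<longlonglongrightarrow> 0"
        using tendsto_mult_right_zero[OF l2_tail[OF z]] by simp
    qed
    then show "(\<lambda>N. D (trunc_seq N z)) \<longlonglongrightarrow> D z" by (rule LIM_zero_cancel)
  qed
  have cb: "\<forall>n. \<exists>C. \<forall>v. \<bar>D (delta n v)\<bar> \<le> C * norm v"
    using C delta_l2 l2_norm_delta by metis
  obtain r where r: "r \<in> l2" "\<forall>z\<in>l2. D z = l2_inner z r" using coord_rep[OF lin conv cb] by blast
  have "D = Rf r" using r out by (auto simp: Rf_def fun_eq_iff)
  then show ?thesis using r by blast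
qed

lemma closure_subspace:
  fixes S :: "'a::real_normed_vector set"
  assumes "subspace S" shows "subspace (closure S)"
  unfolding subspace_def
proof (intro conjI ballI allI)
  show "0 \<in> closure S" using assms closure_subset subspace_0 by blast
next
  fix x y assume x: "x \<in> closure S" and y: "y \<in> closure S"
  obtain u where u: "\<forall>n. u n \<in> S" "u \<longlonglongrightarrow> x" using x unfolding closure_sequential by blast
  obtain v where v: "\<forall>n. v n \<in> S" "v \<longlonglongrightarrow> y" using y unfolding closure_sequential by blast
  have "\<forall>n. u n + v n \<in> S" using u v assms subspace_add by blast
  moreover have "(\<lambda>n. u n + v n) \<longlonglongrightarrow> x + y" using u v by (intro tendsto_add)
  ultimately show "x + y \<in> closure S"
    by (intro closure_sequential[THEN iffD2] exI[of _ "\<lambda>n. u n + v n"]) simp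
next
  fix c :: real and x assume x: "x \<in> closure S"
  obtain u where u: "\<forall>n. u n \<in> S" "u \<longlonglongrightarrow> x" using x unfolding closure_sequential by blast
  have "\<forall>n. c *\<^sub>R u n \<in> S" using u assms subspace_scale by blast
  moreover have "(\<lambda>n. c *\<^sub>R u n) \<longlonglongrightarrow> c *\<^sub>R x" using u by (intro tendsto_scaleR tendsto_const)
  ultimately show "c *\<^sub>R x \<in> closure S"
    by (intro closure_sequential[THEN iffD2] exI[of _ "\<lambda>n. c *\<^sub>R u n"]) simp
qed




locale setting =
  fixes Zs :: "('z::{real_inner, complete_space}) seq set"
    and H :: "'z seq \<Rightarrow> 'y::{real_inner, complete_space}"
    and F :: "('z seq \<Rightarrow> real) set"
    and ip :: "('z seq \<Rightarrow> real) \<Rightarrow> ('z seq \<Rightarrow> real) \<Rightarrow> real"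
    and L :: "'z seq \<Rightarrow> 'y"
  assumes std: "standing_assumption Zs"
    and B2_sub: "B2 \<subseteq> Zs"
    and fmp: "minimal_FMP Zs H"
    and mcont: "minimally_continuous H"
    and rkhs: "is_RKHS Zs (\<lambda>z1 z2. inner (H z1) (H z2)) F ip"
    and Llin: "\<forall>x\<in>span Zs. \<forall>y\<in>span Zs. \<forall>a b. L (a *\<^sub>R x + b *\<^sub>R y) = a *\<^sub>R L x + b *\<^sub>R L y"
    and HL: "\<forall>z\<in>Zs. H z = L z"
begin

definition sec :: "'z seq \<Rightarrow> 'z seq \<Rightarrow> real" where
  "sec x = (\<lambda>y. if y \<in> Zs then inner (H y) (H x) else 0)"

definition kk :: "'z seq \<Rightarrow> 'z seq \<Rightarrow> real" where
  "kk x = (\<lambda>y. if y \<in> Zs then inner (H y) (L x) else 0)"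

definition Phi :: "('z seq \<Rightarrow> real) \<Rightarrow> 'z seq \<Rightarrow> real" where
  "Phi f x = ip f (kk x)"

lemma rk1: "(\<forall>f\<in>F. \<forall>x. x \<notin> Zs \<longrightarrow> f x = 0)"
  using rkhs unfolding is_RKHS_def by (elim conjE) assumption

lemma rk2: "subspace F"
  using rkhs unfolding is_RKHS_def by (elim conjE) assumption

lemma rk3: "(\<forall>f\<in>F. \<forall>g\<in>F. ip f g = ip g f)"
  using rkhs unfolding is_RKHS_def by (elim conjE) assumption

lemma rk4: "(\<forall>f\<in>F. \<forall>g\<in>F. \<forall>h\<in>F. \<forall>a b. ip (a *\<^sub>R f + b *\<^sub>R g) h = a * ip f h + b * ip g h)"
  using rkhs unfolding is_RKHS_def by (elim conjE) assumption

lemma rk5: "(\<forall>f\<in>F. ip f f \<ge> 0)"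
  using rkhs unfolding is_RKHS_def by (elim conjE) assumption

lemma rk6: "(\<forall>x\<in>Zs. (\<lambda>y. if y \<in> Zs then inner (H y) (H x) else 0) \<in> F)"
  using rkhs unfolding is_RKHS_def by (elim conjE) assumption

lemma rk7: "(\<forall>f\<in>F. \<forall>x\<in>Zs. f x = ip f (\<lambda>y. if y \<in> Zs then inner (H y) (H x) else 0))"
  using rkhs unfolding is_RKHS_def by (elim conjE) assumption

lemma F_out: "f \<in> F \<Longrightarrow> x \<notin> Zs \<Longrightarrow> f x = 0"
  using rk1 by blast
lemma F_sub: "subspace F"
  by (rule rk2)
lemma ip_sym: "f \<in> F \<Longrightarrow> g \<in> F \<Longrightarrow> ip f g = ip g f"
  using rk3 by blast
lemma ip_lin: "f \<in> F \<Longrightarrow> g \<in> F \<Longrightarrow> h \<in> F \<Longrightarrow> ip (a *\<^sub>R f + b *\<^sub>R g) h = a * ip f h + b * ip g h"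
  using rk4 by blast
lemma ip_nonneg: "f \<in> F \<Longrightarrow> ip f f \<ge> 0"
  using rk5 by blast
lemma sec_F: "x \<in> Zs \<Longrightarrow> sec x \<in> F"
  using rk6 unfolding sec_def by blast
lemma repro: "f \<in> F \<Longrightarrow> x \<in> Zs \<Longrightarrow> f x = ip f (sec x)"
  using rk7 unfolding sec_def by blast

lemma F_lin: "f \<in> F \<Longrightarrow> g \<in> F \<Longrightarrow> a *\<^sub>R f + b *\<^sub>R g \<in> F"
  using F_sub by (intro subspace_add subspace_scale) auto

lemma ip_lin2: "f \<in> F \<Longrightarrow> g \<in> F \<Longrightarrow> h \<in> F \<Longrightarrow> ip h (a *\<^sub>R f + b *\<^sub>R g) = a * ip h f + b * ip h g"
  using ip_lin[of f g h a b] ip_sym[of h "a *\<^sub>R f + b *\<^sub>R g"] ip_sym[of h f] ip_sym[of h g] F_lin[of f g a b]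
  by simp

lemma ip_scale: "f \<in> F \<Longrightarrow> h \<in> F \<Longrightarrow> ip (c *\<^sub>R f) h = c * ip f h"
  using ip_lin[of f f h c 0] by simp

lemma ip_scale2: "f \<in> F \<Longrightarrow> h \<in> F \<Longrightarrow> ip h (c *\<^sub>R f) = c * ip h f"
  using ip_lin2[of f f h c 0] by simp

lemma ip_diff2: "f \<in> F \<Longrightarrow> g \<in> F \<Longrightarrow> h \<in> F \<Longrightarrow> ip h (f - g) = ip h f - ip h g"
  using ip_lin2[of f g h 1 "-1"] by simp

lemma ip_diff: "f \<in> F \<Longrightarrow> g \<in> F \<Longrightarrow> h \<in> F \<Longrightarrow> ip (f - g) h = ip f h - ip g h"
  using ip_lin[of f g h 1 "-1"] by simp

lemma F_diff: "f \<in> F \<Longrightarrow> g \<in> F \<Longrightarrow> f - g \<in> F"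
  using F_lin[of f g 1 "-1"] by simp

lemma ip_CS: assumes f: "f \<in> F" and g: "g \<in> F"
  shows "\<bar>ip f g\<bar> \<le> sqrt (ip f f) * sqrt (ip g g)"
proof -
  have "\<forall>t. ip f f + 2 * t * ip f g + t\<^sup>2 * ip g g \<ge> 0"
  proof
    fix t :: real
    have fg: "1 *\<^sub>R f + t *\<^sub>R g \<in> F" using F_lin[OF f g] .
    have e1: "ip (1 *\<^sub>R f + t *\<^sub>R g) (1 *\<^sub>R f + t *\<^sub>R g) = 1 * ip f (1 *\<^sub>R f + t *\<^sub>R g) + t * ip g (1 *\<^sub>R f + t *\<^sub>R g)"
      by (rule ip_lin[OF f g fg])
    have e2: "ip f (1 *\<^sub>R f + t *\<^sub>R g) = 1 * ip f f + t * ip f g" by (rule ip_lin2[OF f g f])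
    have e3: "ip g (1 *\<^sub>R f + t *\<^sub>R g) = 1 * ip g f + t * ip g g" by (rule ip_lin2[OF f g g])
    have "ip (1 *\<^sub>R f + t *\<^sub>R g) (1 *\<^sub>R f + t *\<^sub>R g) = ip f f + 2 * t * ip f g + t\<^sup>2 * ip g g"
      unfolding e1 e2 e3 using ip_sym[OF f g] by (simp add: algebra_simps power2_eq_square)
    then show "ip f f + 2 * t * ip f g + t\<^sup>2 * ip g g \<ge> 0" using ip_nonneg[OF fg] by simp
  qed
  then have "(ip f g)\<^sup>2 \<le> ip f f * ip g g" by (rule quad_discr[OF _ ip_nonneg[OF g]])
  then have "sqrt ((ip f g)\<^sup>2) \<le> sqrt (ip f f * ip g g)" by (rule real_sqrt_le_mono)
  then show ?thesis by (simp add: real_sqrt_mult)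
qed

lemma sec_ip: "a \<in> Zs \<Longrightarrow> b \<in> Zs \<Longrightarrow> ip (sec a) (sec b) = inner (H a) (H b)"
  using repro[OF sec_F, of a b] by (simp add: sec_def inner_commute)

lemma zero_Zs: "0 \<in> Zs"
proof -
  have "delta 0 (0::'z) \<in> Zs" using std unfolding standing_assumption_def by simp
  moreover have "delta 0 (0::'z) = 0" by (simp add: delta_def fun_eq_iff)
  ultimately show ?thesis by simp
qed

lemma trunc_Zs: "z \<in> Zs \<Longrightarrow> trunc_seq N z \<in> Zs"
  using std unfolding standing_assumption_def trunc_seq_def by blast

lemma delta_Zs: "norm v \<le> 1 \<Longrightarrow> delta n v \<in> Zs"
  using std unfolding standing_assumption_def by simp

lemma l2_span: assumes "x \<in> l2" shows "x \<in> span Zs"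
proof -
  obtain c b where b: "b \<in> B2" and x: "x = c *\<^sub>R b" using B2_decomp[OF assms] by blast
  have "b \<in> span Zs" using b B2_sub span_base by blast
  then show ?thesis unfolding x by (rule span_scale)
qed

lemma L_lin: "x \<in> l2 \<Longrightarrow> y \<in> l2 \<Longrightarrow> L (a *\<^sub>R x + b *\<^sub>R y) = a *\<^sub>R L x + b *\<^sub>R L y"
  using Llin l2_span by blast

lemma L_scale: "x \<in> l2 \<Longrightarrow> L (c *\<^sub>R x) = c *\<^sub>R L x"
  using L_lin[of x x c 0] by simp

lemma L_add: "x \<in> l2 \<Longrightarrow> y \<in> l2 \<Longrightarrow> L (x + y) = L x + L y"
  using L_lin[of x y 1 1] by simp

lemma L_diff: "x \<in> l2 \<Longrightarrow> y \<in> l2 \<Longrightarrow> L (x - y) = L x - L y"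
  using L_lin[of x y 1 "-1"] by simp

lemma L_zero: "L 0 = 0"
  using L_scale[OF l2_zero, of 0] by simp

lemma H_zero: "H 0 = 0"
  using HL zero_Zs L_zero by simp

lemma kk_sec: assumes "x \<in> Zs" shows "kk x = sec x"
proof -
  have "H x = L x" using HL assms by blast
  then show ?thesis unfolding kk_def sec_def by (simp only:)
qed

lemma kk_lin: "x \<in> l2 \<Longrightarrow> y \<in> l2 \<Longrightarrow> kk (a *\<^sub>R x + b *\<^sub>R y) = a *\<^sub>R kk x + b *\<^sub>R kk y"
  by (simp add: kk_def L_lin fun_eq_iff inner_add_right)

lemma kk_scale: "x \<in> l2 \<Longrightarrow> kk (c *\<^sub>R x) = c *\<^sub>R kk x"
  using kk_lin[of x x c 0] by simp

lemma kk_F: assumes "x \<in> l2" shows "kk x \<in> F"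
proof -
  obtain c b where b: "b \<in> B2" and x: "x = c *\<^sub>R b" using B2_decomp[OF assms] by blast
  have bZ: "b \<in> Zs" using b B2_sub by blast
  have "kk x = c *\<^sub>R sec b" unfolding x using kk_scale[OF B2_l2[OF b]] kk_sec[OF bZ] by simp
  then show ?thesis using F_sub sec_F[OF bZ] subspace_scale by metis
qed

lemma ip_kk: assumes x: "x \<in> l2" and y: "y \<in> l2" shows "ip (kk x) (kk y) = inner (L x) (L y)"
proof -
  obtain c b where b: "b \<in> B2" and xb: "x = c *\<^sub>R b" using B2_decomp[OF x] by blast
  obtain d b' where b': "b' \<in> B2" and yb: "y = d *\<^sub>R b'" using B2_decomp[OF y] by blast
  have bZ: "b \<in> Zs" and bZ': "b' \<in> Zs" using b b' B2_sub by auto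
  have bl: "b \<in> l2" and bl': "b' \<in> l2" using b b' B2_l2 by auto
  have "ip (kk x) (kk y) = ip (c *\<^sub>R sec b) (d *\<^sub>R sec b')"
    unfolding xb yb kk_scale[OF bl] kk_scale[OF bl'] kk_sec[OF bZ] kk_sec[OF bZ'] ..
  also have "\<dots> = c * d * ip (sec b) (sec b')"
    using sec_F[OF bZ] sec_F[OF bZ'] F_lin ip_scale ip_scale2
    by (simp add: ip_scale ip_scale2 F_lin subspace_scale[OF F_sub])
  also have "\<dots> = c * d * inner (L b) (L b')" using sec_ip[OF bZ bZ'] HL bZ bZ' by simp
  also have "\<dots> = inner (L x) (L y)" unfolding xb yb L_scale[OF bl] L_scale[OF bl'] by simp
  finally show ?thesis .
qed

end



context setting
begin

lemma Phi_lin: assumes f: "f \<in> F" and x: "x \<in> l2" and y: "y \<in> l2"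
  shows "Phi f (a *\<^sub>R x + b *\<^sub>R y) = a * Phi f x + b * Phi f y"
  unfolding Phi_def kk_lin[OF x y] by (rule ip_lin2[OF kk_F[OF x] kk_F[OF y] f])

lemma Phi_B2: assumes f: "f \<in> F" and b: "b \<in> B2" shows "Phi f b = f b"
proof -
  have bZ: "b \<in> Zs" using b B2_sub by blast
  show ?thesis unfolding Phi_def kk_sec[OF bZ] using repro[OF f bZ] by simp
qed

lemma Phi_diff: assumes f: "f \<in> F" and x: "x \<in> l2" and y: "y \<in> l2"
  shows "Phi f x - Phi f y = Phi f (x - y)"
  using Phi_lin[OF f x y, of 1 "-1"] by simp

lemma kk_self: assumes "u \<in> l2" shows "sqrt (ip (kk u) (kk u)) = norm (L u)"
  using ip_kk[OF assms assms] by (simp add: power2_norm_eq_inner[symmetric])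

lemma Phi_bound: assumes f: "f \<in> F" and x: "x \<in> l2" and y: "y \<in> l2"
  shows "\<bar>Phi f x - Phi f y\<bar> \<le> sqrt (ip f f) * norm (L x - L y)"
proof -
  have u: "x - y \<in> l2" using l2_diff[OF x y] .
  have "\<bar>Phi f x - Phi f y\<bar> = \<bar>ip f (kk (x - y))\<bar>" using Phi_diff[OF f x y] by (simp add: Phi_def)
  also have "\<dots> \<le> sqrt (ip f f) * sqrt (ip (kk (x - y)) (kk (x - y)))" by (rule ip_CS[OF f kk_F[OF u]])
  also have "\<dots> = sqrt (ip f f) * norm (L x - L y)" unfolding kk_self[OF u] L_diff[OF x y] ..
  finally show ?thesis .
qed

lemma L_trunc: assumes x: "x \<in> l2" shows "(\<lambda>N. L (trunc_seq N x)) \<longlonglongrightarrow> L x"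
proof -
  obtain c b where b: "b \<in> B2" and xb: "x = c *\<^sub>R b" using B2_decomp[OF x] by blast
  have bZ: "b \<in> Zs" using b B2_sub by blast
  have "(\<lambda>N. H (trunc_seq N b)) \<longlonglongrightarrow> H b" using fmp bZ unfolding minimal_FMP_def by blast
  moreover have "H (trunc_seq N b) = L (trunc_seq N b)" for N using HL trunc_Zs[OF bZ] by blast
  moreover have "H b = L b" using HL bZ by blast
  ultimately have "(\<lambda>N. L (trunc_seq N b)) \<longlonglongrightarrow> L b" by simp
  then have "(\<lambda>N. c *\<^sub>R L (trunc_seq N b)) \<longlonglongrightarrow> c *\<^sub>R L b" by (intro tendsto_scaleR tendsto_const)
  moreover have "L (trunc_seq N x) = c *\<^sub>R L (trunc_seq N b)" for N
    unfolding xb trunc_scale using L_scale[OF trunc_l2] by simp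
  moreover have "L x = c *\<^sub>R L b" unfolding xb using L_scale[OF B2_l2[OF b]] .
  ultimately show ?thesis by simp
qed

lemma Phi_conv: assumes f: "f \<in> F" and z: "z \<in> l2"
  shows "(\<lambda>N. Phi f (trunc_seq N z)) \<longlonglongrightarrow> Phi f z"
proof -
  have "(\<lambda>N. Phi f (trunc_seq N z) - Phi f z) \<longlonglongrightarrow> 0"
  proof (rule Lim_null_comparison)
    show "\<forall>\<^sub>F N in sequentially. norm (Phi f (trunc_seq N z) - Phi f z) \<le> sqrt (ip f f) * norm (L (trunc_seq N z) - L z)"
      using Phi_bound[OF f trunc_l2 z] by (intro always_eventually allI) simp
    have "(\<lambda>N. L (trunc_seq N z) - L z) \<longlonglongrightarrow> 0" using L_trunc[OF z] by (rule LIM_zero)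
    then have "(\<lambda>N. norm (L (trunc_seq N z) - L z)) \<longlonglongrightarrow> 0" by (rule tendsto_norm_zero)
    then show "(\<lambda>N. sqrt (ip f f) * norm (L (trunc_seq N z) - L z)) \<longlonglongrightarrow> 0"
      by (rule tendsto_mult_right_zero)
  qed
  then show ?thesis by (rule LIM_zero_cancel)
qed

lemma delta_bound: "\<exists>M. \<forall>v. norm (L (delta n v)) \<le> M * norm v"
proof -
  have cont: "continuous_on (cball 0 1) (H \<circ> delta n)" using mcont unfolding minimally_continuous_def by blast
  have "(0::'z) \<in> cball 0 1" by simp
  then obtain d where d: "d > 0" and dH: "\<forall>x'\<in>cball 0 1. dist x' 0 < d \<longrightarrow> dist ((H \<circ> delta n) x') ((H \<circ> delta n) 0) < 1"
    using cont unfolding continuous_on_iff by (meson zero_less_one)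
  have d0: "delta n (0::'z) = 0" by (simp add: delta_def fun_eq_iff)
  define e where "e = min d 1 / 2"
  have e: "e > 0" "e < d" "e \<le> 1" using d by (auto simp: e_def)
  show ?thesis
  proof (intro exI allI)
    fix v :: 'z
    show "norm (L (delta n v)) \<le> (1 / e) * norm v"
    proof (cases "v = 0")
      case True then show ?thesis using d0 L_zero by simp
    next
      case False
      then have nv: "norm v > 0" by simp
      define w where "w = (e / norm v) *\<^sub>R v"
      have nw: "norm w = e" using nv e by (simp add: w_def)
      have "w \<in> cball 0 1" "dist w 0 < d" using nw e by auto
      then have "dist (H (delta n w)) (H (delta n 0)) < 1" using dH by auto
      then have Hw: "norm (H (delta n w)) < 1" using d0 H_zero by simp
      have "delta n w \<in> Zs" using nw e by (intro delta_Zs) simp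
      then have HLw: "H (delta n w) = L (delta n w)" using HL by blast
      have "delta n v = (norm v / e) *\<^sub>R delta n w"
        using nv e by (simp add: w_def delta_def fun_eq_iff)
      then have "L (delta n v) = (norm v / e) *\<^sub>R L (delta n w)" using L_scale[OF delta_l2] by simp
      then have "norm (L (delta n v)) = (norm v / e) * norm (L (delta n w))" using nv e by simp
      also have "\<dots> \<le> (norm v / e) * 1" using Hw HLw nv e by (intro mult_left_mono) auto
      finally show ?thesis by simp
    qed
  qed
qed

lemma rep_F: assumes f: "f \<in> F" shows "\<exists>a\<in>l2. \<forall>z\<in>l2. Phi f z = l2_inner z a"
proof (rule coord_rep)
  show "\<forall>x\<in>l2. \<forall>y\<in>l2. \<forall>a b. Phi f (a *\<^sub>R x + b *\<^sub>R y) = a * Phi f x + b * Phi f y"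
    using Phi_lin[OF f] by blast
  show "\<forall>z\<in>l2. (\<lambda>N. Phi f (trunc_seq N z)) \<longlonglongrightarrow> Phi f z" using Phi_conv[OF f] by blast
  show "\<forall>n. \<exists>C. \<forall>v. \<bar>Phi f (delta n v)\<bar> \<le> C * norm v"
  proof
    fix n
    obtain M where M: "\<forall>v. norm (L (delta n v)) \<le> M * norm v" using delta_bound by blast
    have "\<bar>Phi f (delta n v)\<bar> \<le> (sqrt (ip f f) * M) * norm v" for v
    proof -
      have "Phi f 0 = 0" using Phi_lin[OF f l2_zero l2_zero, of 0 0] by simp
      moreover have "delta n (0::'z) = 0" by (simp add: delta_def fun_eq_iff)
      ultimately have "\<bar>Phi f (delta n v)\<bar> = \<bar>Phi f (delta n v) - Phi f (delta n 0)\<bar>" by simp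
      also have "\<dots> \<le> sqrt (ip f f) * norm (L (delta n v) - L (delta n 0))"
        by (rule Phi_bound[OF f delta_l2 delta_l2])
      also have "\<dots> = sqrt (ip f f) * norm (L (delta n v))"
        using \<open>delta n (0::'z) = 0\<close> L_zero by simp
      also have "\<dots> \<le> sqrt (ip f f) * (M * norm v)"
        using M ip_nonneg[OF f] by (intro mult_left_mono) auto
      finally show ?thesis by simp
    qed
    then show "\<exists>C. \<forall>v. \<bar>Phi f (delta n v)\<bar> \<le> C * norm v" by blast
  qed
qed

lemma rep_F_B2: assumes f: "f \<in> F" shows "\<exists>a\<in>l2. \<forall>b\<in>B2. f b = l2_inner b a"
  using rep_F[OF f] Phi_B2[OF f] B2_l2 by metis

lemma ext_F: assumes f: "f \<in> F" and a: "a \<in> l2" and fa: "\<forall>b\<in>B2. f b = l2_inner b a"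
  shows "l2_ext f = Rf a"
proof (rule l2_ext_eq)
  show "\<forall>z. z \<notin> l2 \<longrightarrow> Rf a z = 0" by (simp add: Rf_def)
  show "\<forall>x\<in>l2. \<forall>y\<in>l2. \<forall>aa b. Rf a (aa *\<^sub>R x + b *\<^sub>R y) = aa * Rf a x + b * Rf a y"
    using Rf_lin a by blast
  show "\<forall>z\<in>B2. Rf a z = f z"
  proof
    fix z :: "'z seq" assume z: "z \<in> B2"
    then have "z \<in> l2" by (rule B2_l2)
    then show "Rf a z = f z" using fa z by (simp add: Rf_def)
  qed
qed

end



context setting
begin

lemma part1: assumes f: "f \<in> F" shows "l2_ext f \<in> l2_dual"
proof -
  obtain a where a: "a \<in> l2" "\<forall>b\<in>B2. f b = l2_inner b a" using rep_F_B2[OF f] by blast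
  show ?thesis using ext_F[OF f a] Rf_dual[OF a(1)] by simp
qed

lemma part2: assumes f: "f \<in> F" and g: "g \<in> F"
  shows "l2_ext (\<alpha> *\<^sub>R f + \<beta> *\<^sub>R g) = \<alpha> *\<^sub>R l2_ext f + \<beta> *\<^sub>R l2_ext g"
proof -
  obtain a where a: "a \<in> l2" "\<forall>b\<in>B2. f b = l2_inner b a" using rep_F_B2[OF f] by blast
  obtain c where c: "c \<in> l2" "\<forall>b\<in>B2. g b = l2_inner b c" using rep_F_B2[OF g] by blast
  have ac: "\<alpha> *\<^sub>R a + \<beta> *\<^sub>R c \<in> l2" using a c by (intro l2_lin) auto
  have "\<forall>b\<in>B2. (\<alpha> *\<^sub>R f + \<beta> *\<^sub>R g) b = l2_inner b (\<alpha> *\<^sub>R a + \<beta> *\<^sub>R c)"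
  proof
    fix b :: "'z seq" assume b: "b \<in> B2"
    have bl: "b \<in> l2" using b by (rule B2_l2)
    show "(\<alpha> *\<^sub>R f + \<beta> *\<^sub>R g) b = l2_inner b (\<alpha> *\<^sub>R a + \<beta> *\<^sub>R c)"
      using a c b l2_inner_lin2[OF a(1) c(1) bl, of \<alpha> \<beta>] by simp
  qed
  then have e: "l2_ext (\<alpha> *\<^sub>R f + \<beta> *\<^sub>R g) = Rf (\<alpha> *\<^sub>R a + \<beta> *\<^sub>R c)"
    using ext_F[OF F_lin[OF f g] ac] by blast
  show ?thesis unfolding e ext_F[OF f a] ext_F[OF g c]
    by (auto simp: Rf_def fun_eq_iff l2_inner_lin2[OF a(1) c(1)])
qed

lemma sec_dist: assumes a: "a \<in> Zs" and b: "b \<in> Zs"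
  shows "ip (sec a - sec b) (sec a - sec b) = (norm (H a - H b))\<^sup>2"
proof -
  have sa: "sec a \<in> F" and sb: "sec b \<in> F" using sec_F a b by auto
  have d: "sec a - sec b \<in> F" using F_diff[OF sa sb] .
  have "ip (sec a - sec b) (sec a - sec b) = ip (sec a) (sec a - sec b) - ip (sec b) (sec a - sec b)"
    by (rule ip_diff[OF sa sb d])
  also have "\<dots> = (ip (sec a) (sec a) - ip (sec a) (sec b)) - (ip (sec b) (sec a) - ip (sec b) (sec b))"
    using ip_diff2[OF sa sb sa] ip_diff2[OF sa sb sb] by simp
  also have "\<dots> = (norm (H a - H b))\<^sup>2"
    unfolding sec_ip[OF a a] sec_ip[OF a b] sec_ip[OF b a] sec_ip[OF b b] power2_norm_eq_inner
    by (simp add: inner_diff_left inner_diff_right inner_commute)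
  finally show ?thesis .
qed

lemma H_trunc: assumes z: "z \<in> Zs" shows "(\<lambda>N. H (trunc_seq N z)) \<longlonglongrightarrow> H z"
  using fmp z unfolding minimal_FMP_def by blast

lemma part3: "inj_on l2_ext F"
proof (rule inj_onI)
  fix f g assume f: "f \<in> F" and g: "g \<in> F" and eq: "l2_ext f = l2_ext g"
  obtain a where a: "a \<in> l2" "\<forall>b\<in>B2. f b = l2_inner b a" using rep_F_B2[OF f] by blast
  obtain c where c: "c \<in> l2" "\<forall>b\<in>B2. g b = l2_inner b c" using rep_F_B2[OF g] by blast
  have RR: "Rf a = Rf c" using eq ext_F[OF f a] ext_F[OF g c] by simp
  define h where "h = f - g"
  have hF: "h \<in> F" unfolding h_def using F_diff[OF f g] .
  have hB: "h b = 0" if b: "b \<in> B2" for b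
  proof -
    have bl: "b \<in> l2" using b by (rule B2_l2)
    have "Rf a b = Rf c b" using RR by simp
    then show ?thesis using a c b bl by (simp add: h_def Rf_def)
  qed
  have Ph: "Phi h x = 0" if x: "x \<in> l2" for x
  proof -
    obtain c b where b: "b \<in> B2" and xb: "x = c *\<^sub>R b" using B2_decomp[OF x] by blast
    have bl: "b \<in> l2" using b by (rule B2_l2)
    have "Phi h (c *\<^sub>R b + 0 *\<^sub>R b) = c * Phi h b + 0 * Phi h b" by (rule Phi_lin[OF hF bl bl])
    then show ?thesis using xb Phi_B2[OF hF b] hB[OF b] by simp
  qed
  have hz: "h z = 0" for z
  proof (cases "z \<in> Zs")
    case False then show ?thesis using F_out[OF hF] by simp
  next
    case True
    define t where "t N = trunc_seq N z" for N
    have tZ: "t N \<in> Zs" for N unfolding t_def using trunc_Zs[OF True] .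
    have tl: "t N \<in> l2" for N unfolding t_def by (rule trunc_l2)
    have ht: "h (t N) = 0" for N
      using Ph[OF tl] repro[OF hF tZ] kk_sec[OF tZ] by (simp add: Phi_def)
    have bnd: "\<bar>h z\<bar> \<le> sqrt (ip h h) * norm (H z - H (t N))" for N
    proof -
      have sz: "sec z \<in> F" and st: "sec (t N) \<in> F" using sec_F True tZ by auto
      have "\<bar>h z\<bar> = \<bar>ip h (sec z) - ip h (sec (t N))\<bar>"
        using repro[OF hF True] repro[OF hF tZ] ht by simp
      also have "\<dots> = \<bar>ip h (sec z - sec (t N))\<bar>" using ip_diff2[OF sz st hF] by simp
      also have "\<dots> \<le> sqrt (ip h h) * sqrt (ip (sec z - sec (t N)) (sec z - sec (t N)))"
        by (rule ip_CS[OF hF F_diff[OF sz st]])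
      also have "\<dots> = sqrt (ip h h) * norm (H z - H (t N))"
        unfolding sec_dist[OF True tZ[of N]] by simp
      finally show ?thesis .
    qed
    have "(\<lambda>N. H (t N) - H z) \<longlonglongrightarrow> 0" unfolding t_def using H_trunc[OF True] by (rule LIM_zero)
    then have "(\<lambda>N. norm (H (t N) - H z)) \<longlonglongrightarrow> 0" by (rule tendsto_norm_zero)
    then have lim: "(\<lambda>N. sqrt (ip h h) * norm (H z - H (t N))) \<longlonglongrightarrow> 0"
      using tendsto_mult_right_zero by (simp add: norm_minus_commute)
    have "\<bar>h z\<bar> \<le> 0"
      by (rule tendsto_le[OF sequentially_bot lim tendsto_const]) (simp add: bnd)
    then show ?thesis by simp
  qed
  show "f = g"
  proof
    fix x show "f x = g x" using hz[of x] by (simp add: h_def)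
  qed
qed

lemma Lspan: assumes x: "x \<in> l2" shows "L x \<in> span (H ` B2)"
proof -
  obtain c b where b: "b \<in> B2" and xb: "x = c *\<^sub>R b" using B2_decomp[OF x] by blast
  have bZ: "b \<in> Zs" using b B2_sub by blast
  have "L x = c *\<^sub>R H b" unfolding xb using L_scale[OF B2_l2[OF b]] HL bZ by simp
  moreover have "H b \<in> span (H ` B2)" using b by (intro span_base) simp
  ultimately show ?thesis by (simp add: span_scale)
qed

lemma HZ_closure: assumes z: "z \<in> Zs" shows "H z \<in> closure (span (H ` B2))"
proof -
  have "\<forall>N. H (trunc_seq N z) \<in> span (H ` B2)"
    using Lspan[OF trunc_l2] HL trunc_Zs[OF z] by simp
  then show ?thesis
    by (intro closure_sequential[THEN iffD2] exI[of _ "\<lambda>N. H (trunc_seq N z)"]) (simp add: H_trunc[OF z])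
qed

lemma part4: "span (H ` B2) \<subseteq> closure (span (H ` Zs))"
  using span_mono[OF image_mono[OF B2_sub]] closure_subset by blast

lemma part5: "closure (span (H ` Zs)) \<subseteq> closure (span (H ` B2))"
proof (rule closure_minimal[OF _ closed_closure])
  show "span (H ` Zs) \<subseteq> closure (span (H ` B2))"
    by (rule span_minimal) (use HZ_closure closure_subspace[OF subspace_span] in auto)
qed

end



context setting
begin

lemma l2_inner_scale_both: assumes "x \<in> l2" "y \<in> l2"
  shows "l2_inner (c *\<^sub>R x) (d *\<^sub>R y) = c * d * l2_inner x y"
proof -
  have dy: "d *\<^sub>R y \<in> l2" using assms by (simp add: l2_scale)
  have "l2_inner (c *\<^sub>R x + 0 *\<^sub>R x) (d *\<^sub>R y) = c * l2_inner x (d *\<^sub>R y) + 0 * l2_inner x (d *\<^sub>R y)"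
    by (rule l2_inner_lin[OF assms(1) assms(1) dy])
  moreover have "l2_inner x (d *\<^sub>R y + 0 *\<^sub>R y) = d * l2_inner x y + 0 * l2_inner x y"
    by (rule l2_inner_lin2[OF assms(2) assms(2) assms(1)])
  ultimately show ?thesis by simp
qed

context
  assumes ortho: "\<forall>z1\<in>B2. \<forall>z2\<in>B2. inner (H z1) (H z2) = l2_inner z1 z2"
begin

lemma L_ortho: assumes x: "x \<in> l2" and y: "y \<in> l2" shows "inner (L x) (L y) = l2_inner x y"
proof -
  obtain c b where b: "b \<in> B2" and xb: "x = c *\<^sub>R b" using B2_decomp[OF x] by blast
  obtain d b' where b': "b' \<in> B2" and yb: "y = d *\<^sub>R b'" using B2_decomp[OF y] by blast
  have bZ: "b \<in> Zs" and bZ': "b' \<in> Zs" using b b' B2_sub by auto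
  have bl: "b \<in> l2" and bl': "b' \<in> l2" using b b' B2_l2 by auto
  have "inner (L x) (L y) = c * d * inner (H b) (H b')"
    unfolding xb yb L_scale[OF bl] L_scale[OF bl'] using HL bZ bZ' by simp
  also have "\<dots> = c * d * l2_inner b b'" using ortho b b' by simp
  also have "\<dots> = l2_inner x y" unfolding xb yb using l2_inner_scale_both[OF bl bl'] by simp
  finally show ?thesis .
qed

lemma kk_ext: assumes r: "r \<in> l2" shows "l2_ext (kk r) = Rf r"
proof (rule ext_F[OF kk_F[OF r] r])
  show "\<forall>b\<in>B2. kk r b = l2_inner b r"
  proof
    fix b :: "'z seq" assume b: "b \<in> B2"
    have bZ: "b \<in> Zs" using b B2_sub by blast
    have bl: "b \<in> l2" using b by (rule B2_l2)
    have "kk r b = inner (H b) (L r)" using bZ by (simp add: kk_def)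
    also have "\<dots> = inner (L b) (L r)" using HL bZ by simp
    also have "\<dots> = l2_inner b r" by (rule L_ortho[OF bl r])
    finally show "kk r b = l2_inner b r" .
  qed
qed

lemma part6a: "bij_betw l2_ext F l2_dual"
  unfolding bij_betw_def
proof (intro conjI part3 subset_antisym)
  show "l2_ext ` F \<subseteq> l2_dual" using part1 by blast
  show "l2_dual \<subseteq> l2_ext ` F"
  proof
    fix D :: "'z seq \<Rightarrow> real" assume D: "D \<in> l2_dual"
    obtain r where r: "r \<in> l2" "D = Rf r" using dual_rep[OF D] by blast
    have "D = l2_ext (kk r)" using kk_ext[OF r(1)] r(2) by simp
    then show "D \<in> l2_ext ` F" using kk_F[OF r(1)] by blast
  qed
qed

lemma F_is_kk: assumes f: "f \<in> F" and a: "a \<in> l2" "\<forall>b\<in>B2. f b = l2_inner b a"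
  shows "f = kk a"
proof -
  have "l2_ext f = l2_ext (kk a)" using ext_F[OF f a] kk_ext[OF a(1)] by simp
  then show ?thesis using part3 f kk_F[OF a(1)] by (auto dest: inj_onD)
qed

lemma part6b: assumes f: "f \<in> F" and g: "g \<in> F"
  shows "l2_dual_inner (l2_ext f) (l2_ext g) = ip f g"
proof -
  obtain a where a: "a \<in> l2" "\<forall>b\<in>B2. f b = l2_inner b a" using rep_F_B2[OF f] by blast
  obtain c where c: "c \<in> l2" "\<forall>b\<in>B2. g b = l2_inner b c" using rep_F_B2[OF g] by blast
  have "l2_dual_inner (l2_ext f) (l2_ext g) = l2_inner a c"
    unfolding ext_F[OF f a] ext_F[OF g c] l2_dual_inner_def riesz_rep_Rf[OF a(1)] riesz_rep_Rf[OF c(1)] ..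
  also have "\<dots> = inner (L a) (L c)" using L_ortho[OF a(1) c(1)] by simp
  also have "\<dots> = ip (kk a) (kk c)" using ip_kk[OF a(1) c(1)] by simp
  also have "\<dots> = ip f g" using F_is_kk[OF f a] F_is_kk[OF g c] by simp
  finally show ?thesis .
qed

lemma normL: assumes z: "z \<in> l2" shows "norm (L z) = l2_norm z"
proof -
  have "(norm (L z))\<^sup>2 = (l2_norm z)\<^sup>2"
    using L_ortho[OF z z] l2_inner_self[OF z] by (simp add: power2_norm_eq_inner)
  then show ?thesis using l2_norm_nonneg[OF z] by (simp add: power2_eq_iff_nonneg)
qed

lemma part6c: "span (H ` B2) = closure (span (H ` Zs))"
proof (rule subset_antisym[OF part4])
  show "closure (span (H ` Zs)) \<subseteq> span (H ` B2)"
  proof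
    fix y assume "y \<in> closure (span (H ` Zs))"
    then have yC: "y \<in> closure (span (H ` B2))" using part5 by blast
    define D where "D = (\<lambda>z. if z \<in> l2 then inner (L z) y else 0)"
    have "D \<in> l2_dual"
      unfolding l2_dual_def
    proof (intro CollectI conjI allI impI ballI)
      show "\<And>z. z \<notin> l2 \<Longrightarrow> D z = 0" by (simp add: D_def)
      show "\<And>x z a b. x \<in> l2 \<Longrightarrow> z \<in> l2 \<Longrightarrow> D (a *\<^sub>R x + b *\<^sub>R z) = a * D x + b * D z"
        by (simp add: D_def l2_lin L_lin inner_add_left)
      show "\<exists>C. \<forall>z\<in>l2. \<bar>D z\<bar> \<le> C * l2_norm z"
      proof (intro exI ballI)
        fix z :: "'z seq" assume z: "z \<in> l2"
        have "\<bar>D z\<bar> \<le> norm (L z) * norm y" using z Cauchy_Schwarz_ineq2 by (simp add: D_def)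
        then show "\<bar>D z\<bar> \<le> norm y * l2_norm z" using normL[OF z] by (simp add: mult.commute)
      qed
    qed
    then obtain r where r: "r \<in> l2" "D = Rf r" using dual_rep by blast
    have orth: "inner w (y - L r) = 0" if w: "w \<in> closure (span (H ` B2))" for w
    proof -
      have "span (H ` B2) \<subseteq> {w. inner w (y - L r) = 0}"
      proof (rule span_minimal)
        show "H ` B2 \<subseteq> {w. inner w (y - L r) = 0}"
        proof
          fix w assume "w \<in> H ` B2"
          then obtain b where b: "b \<in> B2" and wb: "w = H b" by blast
          have bZ: "b \<in> Zs" using b B2_sub by blast
          have bl: "b \<in> l2" using b by (rule B2_l2)
          have "D b = Rf r b" using r by simp
          then have "inner (L b) y = l2_inner b r" using bl by (simp add: D_def Rf_def)
          also have "\<dots> = inner (L b) (L r)" using L_ortho[OF bl r(1)] by simp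
          finally have "inner (L b) (y - L r) = 0" by (simp add: inner_diff_right)
          then show "w \<in> {w. inner w (y - L r) = 0}" using wb HL bZ by simp
        qed
        show "subspace {w. inner w (y - L r) = 0}" by (rule subspace_hyperplane2)
      qed
      then have "closure (span (H ` B2)) \<subseteq> {w. inner w (y - L r) = 0}"
        using closed_hyperplane[of "y - L r" 0] by (intro closure_minimal) (auto simp: inner_commute)
      then show ?thesis using w by blast
    qed
    have Lr: "L r \<in> span (H ` B2)" by (rule Lspan[OF r(1)])
    then have "L r \<in> closure (span (H ` B2))" using closure_subset by blast
    then have "y - L r \<in> closure (span (H ` B2))"
      using yC closure_subspace[OF subspace_span] subspace_diff by blast
    then have "inner (y - L r) (y - L r) = 0" by (rule orth)
    then have "y = L r" by simp
    then show "y \<in> span (H ` B2)" using Lr by simp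
  qed
qed

end
end

theorem main:
  fixes Zs :: "('z::{real_inner, complete_space}) seq set"
    and H :: "'z seq \<Rightarrow> 'y::{real_inner, complete_space}"
    and F :: "('z seq \<Rightarrow> real) set"
    and ip :: "('z seq \<Rightarrow> real) \<Rightarrow> ('z seq \<Rightarrow> real) \<Rightarrow> real"
  assumes std: "standing_assumption Zs"
    and B2_sub: "B2 \<subseteq> Zs"
    and lin: "linear_functional Zs H"
    and fmp: "minimal_FMP Zs H"
    and mcont: "minimally_continuous H"
    and rkhs: "is_RKHS Zs (\<lambda>z1 z2. inner (H z1) (H z2)) F ip"
  shows "(\<forall>f\<in>F. l2_ext f \<in> l2_dual)
       \<and> (\<forall>f\<in>F. \<forall>g\<in>F. \<forall>a b. l2_ext (a *\<^sub>R f + b *\<^sub>R g) = a *\<^sub>R l2_ext f + b *\<^sub>R l2_ext g)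
       \<and> inj_on l2_ext F
       \<and> span (H ` B2) \<subseteq> closure (span (H ` Zs))
       \<and> closure (span (H ` Zs)) \<subseteq> closure (span (H ` B2))
       \<and> ((\<forall>z1\<in>B2. \<forall>z2\<in>B2. inner (H z1) (H z2) = l2_inner z1 z2) \<longrightarrow>
            bij_betw l2_ext F l2_dual
          \<and> (\<forall>f\<in>F. \<forall>g\<in>F. l2_dual_inner (l2_ext f) (l2_ext g) = ip f g)
          \<and> span (H ` B2) = closure (span (H ` Zs)))"
proof -
  obtain L where Llin: "\<forall>x\<in>span Zs. \<forall>y\<in>span Zs. \<forall>a b. L (a *\<^sub>R x + b *\<^sub>R y) = a *\<^sub>R L x + b *\<^sub>R L y"
    and HL: "\<forall>z\<in>Zs. H z = L z"
    using lin unfolding linear_functional_def by blast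
  interpret S: setting Zs H F ip L
    using std B2_sub fmp mcont rkhs Llin HL by unfold_locales
  show ?thesis
    using S.part1 S.part2 S.part3 S.part4 S.part5 S.part6a S.part6b S.part6c by blast
qed



theorem proposition4p2:
  fixes Zs :: "('z::{real_inner, complete_space}) seq set"
    and H :: "'z seq \<Rightarrow> 'y::{real_inner, complete_space}"
    and F :: "('z seq \<Rightarrow> real) set"
    and ip :: "('z seq \<Rightarrow> real) \<Rightarrow> ('z seq \<Rightarrow> real) \<Rightarrow> real"
  assumes std: "standing_assumption Zs"
    and B2_sub: "B2 \<subseteq> Zs"
    and lin: "linear_functional Zs H"
    and fmp: "minimal_FMP Zs H"
    and mcont: "minimally_continuous H"
    and rkhs: "is_RKHS Zs (\<lambda>z1 z2. inner (H z1) (H z2)) F ip"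
  shows "(\<forall>f\<in>F. l2_ext f \<in> l2_dual)
       \<and> (\<forall>f\<in>F. \<forall>g\<in>F. \<forall>a b. l2_ext (a *\<^sub>R f + b *\<^sub>R g) = a *\<^sub>R l2_ext f + b *\<^sub>R l2_ext g)
       \<and> inj_on l2_ext F
       \<and> span (H ` B2) \<subseteq> closure (span (H ` Zs))
       \<and> closure (span (H ` Zs)) \<subseteq> closure (span (H ` B2))
       \<and> ((\<forall>z1\<in>B2. \<forall>z2\<in>B2. inner (H z1) (H z2) = l2_inner z1 z2) \<longrightarrow>
            bij_betw l2_ext F l2_dual
          \<and> (\<forall>f\<in>F. \<forall>g\<in>F. l2_dual_inner (l2_ext f) (l2_ext g) = ip f g)
          \<and> span (H ` B2) = closure (span (H ` Zs)))"
    using std B2_sub lin fmp mcont rkhs by (rule main)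

end
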